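(* Let $\mathcal F$ be a normal TDD representing a tensor $\phi$. Applying a reduction rule (RR1, RR2, RR3 or RR4) to $\mathcal F$ does not change the tensor it represents. Moreover, the reduced TDD of $\phi$ can be obtained from $\mathcal F$ by applying the reduction rules until none is applicable.
   Context: Fix a finite index set $I$ with a linear order $\prec$. Indices take values in $\{0,1\}$; a tensor over $I$ is a map $\{0,1\}^I\to\mathbb{C}$ (tensors over subsets of $I$ are regarded as tensors over $I$ not depending on the other indices). Each index $x$ is regarded as the tensor $x(c)=c$, and $\overline{x}(c):=1-c$; operations on tensors are pointwise. A TDD over $I$ is $\mathcal F=(V,E,index,value,low,high,w)$: a rooted directed acyclic graph with finite node set $V$ partitioned into non-terminal nodes $V_N$ and terminal nodes $V_T$, root $r_{\mathcal F}$; $index:V_N\to I$; $value:V_T\to\mathbb{C}$; $low,high:V_N\to V$ (0- and 1-successors); edges are the low-edges $(v,low(v))$ and high-edges $(v,high(v))$, $v\in V_N$, plus a unique source-less incoming edge $e_r$ of the root; $w$ gives each edge a complex weight and $w_{\mathcal F}:=w(e_r)$. Node tensors: $\Phi(v)=value(v)$ for terminal $v$; otherwise $\Phi(v)=w_0\overline{x_v}\Phi(low(v))+w_1x_v\Phi(high(v))$ with $x_v=index(v)$ and $w_0,w_1$ the low-/high-edge weights. The TDD represents $\Phi(\mathcal F):=w_{\mathcal F}\Phi(r_{\mathcal F})$. Normality (w.r.t. $\prec$): the pivot of a tensor $\phi$ is the lexicographically smallest (compare at the $\prec$-smallest differing index, $0<1$) $\vec a$ with $|\phi(\vec a)|=\max_{\vec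 b}|\phi(\vec b)|$; $\phi$ is normal if $\phi=0$ or $\phi$ equals $1$ at its pivot. A TDD is normal if $\Phi(v)$ is normal for every node $v$. A TDD is reduced if it is normal and (1) $\Phi(v)\neq0$ for every node $v$; (2) all edges of weight $0$ point to the unique terminal node, which has value $1$; (3) $\Phi(u)\neq\Phi(v)$ for any two distinct nodes $u\neq v$. "The reduced TDD of $\phi$" means a reduced TDD $\mathcal G$ with $\Phi(\mathcal G)=\phi$ (such TDDs are unique up to isomorphism among $\prec$-ordered ones). Reduction rules. RR1: merge all terminal nodes with value $1$; delete all terminal nodes with value $0$ (if any), redirect their incoming edges to the (unique) terminal node and reset the weights of these edges to $0$. RR2: redirect all weight-$0$ edges to the terminal node; if these include the incoming edge of the root, the terminal node becomes the new root; delete all nodes (and edges involving them) not reachable from the root. RR3: delete a node $v$ if its 0- and 1-successors are identical and its low- and high-edges have the same weight $w$ (either $0$ or $1$), redirecting its incoming edges to the terminal node with value $1$ if $w=0$ and otherwise to its successor. RR4: merge two nodes if they have the same index, the same 0- and 1-successors, and the same weights on the corresponding edges. *)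

theory Defs
  imports Complex_Main
begin

text \<open>The index set I is the (finite, linearly ordered) type 'i; index values
 0/1 are rendered as False/True; a tensor is a map from assignments to complex.\<close>

type_synonym 'i assignment = "'i \<Rightarrow> bool"
type_synonym 'i tensor = "'i assignment \<Rightarrow> complex"

definition idx_tensor :: "'i \<Rightarrow> 'i tensor" where
  "idx_tensor x = (\<lambda>c. if c x then 1 else 0)"

definition lex_less :: "('i::linorder) assignment \<Rightarrow> 'i assignment \<Rightarrow> bool" where
  "lex_less a b \<longleftrightarrow> (\<exists>i. \<not> a i \<and> b i \<and> (\<forall>j<i. a j = b j))"

definition max_abs :: "('i::finite) tensor \<Rightarrow> real" where
  "max_abs \<phi> = Max (range (\<lambda>b. cmod (\<phi> b)))"

definition pivot :: "('i::{finite,linorder}) tensor \<Rightarrow> 'i assignment" where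
  "pivot \<phi> = (THE a. cmod (\<phi> a) = max_abs \<phi> \<and>
                    (\<forall>b. cmod (\<phi> b) = max_abs \<phi> \<longrightarrow> a = b \<or> lex_less a b))"

definition normal_tensor :: "('i::{finite,linorder}) tensor \<Rightarrow> bool" where
  "normal_tensor \<phi> \<longleftrightarrow> \<phi> = (\<lambda>_. 0) \<or> \<phi> (pivot \<phi>) = 1"

text \<open>Nodes are elements of an arbitrary type 'v.  Edges are the low-edge and
 high-edge of each non-terminal node plus the root edge; their weights are stored
 as t_wlow v, t_whigh v and t_wroot.\<close>

record ('v, 'i) tdd =
  t_nodes :: "'v set"
  t_terms :: "'v set"
  t_root  :: 'v
  t_idx   :: "'v \<Rightarrow> 'i"
  t_val   :: "'v \<Rightarrow> complex"
  t_low   :: "'v \<Rightarrow> 'v"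
  t_high  :: "'v \<Rightarrow> 'v"
  t_wlow  :: "'v \<Rightarrow> complex"
  t_whigh :: "'v \<Rightarrow> complex"
  t_wroot :: complex

definition nonterms :: "('v,'i) tdd \<Rightarrow> 'v set" where
  "nonterms F = t_nodes F - t_terms F"

definition succ_rel :: "('v,'i) tdd \<Rightarrow> ('v \<times> 'v) set" where
  "succ_rel F = {(v, u). v \<in> nonterms F \<and> (u = t_low F v \<or> u = t_high F v)}"

definition is_tdd :: "('v,'i) tdd \<Rightarrow> bool" where
  "is_tdd F \<longleftrightarrow> finite (t_nodes F) \<and> t_terms F \<subseteq> t_nodes F \<and> t_root F \<in> t_nodes F
     \<and> (\<forall>v\<in>nonterms F. t_low F v \<in> t_nodes F \<and> t_high F v \<in> t_nodes F)
     \<and> acyclic (succ_rel F)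
     \<and> (\<forall>v\<in>t_nodes F. (t_root F, v) \<in> (succ_rel F)\<^sup>*)"

definition ordered_tdd :: "('v,'i::linorder) tdd \<Rightarrow> bool" where
  "ordered_tdd F \<longleftrightarrow> (\<forall>v\<in>nonterms F. \<forall>s\<in>{t_low F v, t_high F v}.
        s \<notin> t_terms F \<longrightarrow> t_idx F v < t_idx F s)"

text \<open>Node tensors Phi(v), computed by the defining recursion; the recursion depth
 is bounded by the number of nodes (paths in a DAG visit distinct nodes).\<close>
fun ntensor_fuel :: "nat \<Rightarrow> ('v,'i) tdd \<Rightarrow> 'v \<Rightarrow> 'i tensor" where
  "ntensor_fuel 0 F v = (\<lambda>_. 0)"
| "ntensor_fuel (Suc n) F v =
     (if v \<in> t_terms F then (\<lambda>_. t_val F v)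
      else (\<lambda>c. t_wlow F v * (1 - idx_tensor (t_idx F v) c) * ntensor_fuel n F (t_low F v) c
              + t_whigh F v * idx_tensor (t_idx F v) c * ntensor_fuel n F (t_high F v) c))"

definition node_tensor :: "('v,'i) tdd \<Rightarrow> 'v \<Rightarrow> 'i tensor" where
  "node_tensor F v = ntensor_fuel (card (t_nodes F)) F v"

definition tdd_tensor :: "('v,'i) tdd \<Rightarrow> 'i tensor" where
  "tdd_tensor F = (\<lambda>c. t_wroot F * node_tensor F (t_root F) c)"

definition normal_tdd :: "('v,'i::{finite,linorder}) tdd \<Rightarrow> bool" where
  "normal_tdd F \<longleftrightarrow> (\<forall>v\<in>t_nodes F. normal_tensor (node_tensor F v))"

definition reduced_tdd :: "('v,'i::{finite,linorder}) tdd \<Rightarrow> bool" where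
  "reduced_tdd F \<longleftrightarrow> normal_tdd F
     \<and> (\<forall>v\<in>t_nodes F. node_tensor F v \<noteq> (\<lambda>_. 0))
     \<and> (\<exists>t. t_terms F = {t} \<and> t_val F t = 1
           \<and> (t_wroot F = 0 \<longrightarrow> t_root F = t)
           \<and> (\<forall>v\<in>nonterms F. (t_wlow F v = 0 \<longrightarrow> t_low F v = t)
                             \<and> (t_whigh F v = 0 \<longrightarrow> t_high F v = t)))
     \<and> (\<forall>u\<in>t_nodes F. \<forall>v\<in>t_nodes F. u \<noteq> v \<longrightarrow> node_tensor F u \<noteq> node_tensor F v)"

text \<open>RR1: all terminals of value 0 or 1 are replaced by one terminal t of value 1
 (an existing value-1 terminal, or, if none exists, a former value-0 terminal);
 edges into value-0 terminals get weight 0.  Applicable iff there are at least two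
 value-1 terminals or some value-0 terminal.\<close>
definition rr1 :: "('v,'i) tdd \<Rightarrow> ('v,'i) tdd \<Rightarrow> bool" where
  "rr1 F G \<longleftrightarrow>
     (let T01 = {u\<in>t_terms F. t_val F u = 0 \<or> t_val F u = 1};
          T1 = {u\<in>t_terms F. t_val F u = 1};
          T0 = {u\<in>t_terms F. t_val F u = 0}
      in (card T1 \<ge> 2 \<or> T0 \<noteq> {}) \<and>
       (\<exists>t\<in>T01. (t \<in> T1 \<or> T1 = {}) \<and>
          (let r = (\<lambda>u. if u \<in> T01 then t else u);
               z = (\<lambda>u w. if u \<in> T0 then 0 else w)
           in G = F\<lparr> t_nodes := (t_nodes F - T01) \<union> {t},
                     t_terms := (t_terms F - T01) \<union> {t},
                     t_val := (\<lambda>u. if u = t then 1 else t_val F u),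
                     t_root := r (t_root F),
                     t_low := (\<lambda>v. r (t_low F v)),
                     t_high := (\<lambda>v. r (t_high F v)),
                     t_wlow := (\<lambda>v. z (t_low F v) (t_wlow F v)),
                     t_whigh := (\<lambda>v. z (t_high F v) (t_whigh F v)),
                     t_wroot := z (t_root F) (t_wroot F) \<rparr>)))"

text \<open>RR2 (needs the unique terminal node t): weight-0 edges are redirected to t,
 then unreachable nodes are deleted.  Applicable iff this changes something.\<close>
definition rr2 :: "('v,'i) tdd \<Rightarrow> ('v,'i) tdd \<Rightarrow> bool" where
  "rr2 F G \<longleftrightarrow> (\<exists>t. t_terms F = {t} \<and>
     ((t_wroot F = 0 \<and> t_root F \<noteq> t)
      \<or> (\<exists>v\<in>nonterms F. (t_wlow F v = 0 \<and> t_low F v \<noteq> t) \<or> (t_whigh F v = 0 \<and> t_high F v \<noteq> t))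
      \<or> (\<exists>v\<in>t_nodes F. (t_root F, v) \<notin> (succ_rel F)\<^sup>*)) \<and>
     (let G0 = F\<lparr> t_root := (if t_wroot F = 0 then t else t_root F),
                  t_low := (\<lambda>v. if t_wlow F v = 0 then t else t_low F v),
                  t_high := (\<lambda>v. if t_whigh F v = 0 then t else t_high F v) \<rparr>;
          R = {v\<in>t_nodes G0. (t_root G0, v) \<in> (succ_rel G0)\<^sup>*}
      in G = G0\<lparr> t_nodes := R, t_terms := t_terms G0 \<inter> R \<rparr>))"

definition redirect_delete :: "('v,'i) tdd \<Rightarrow> 'v \<Rightarrow> 'v \<Rightarrow> bool \<Rightarrow> ('v,'i) tdd" where
  "redirect_delete F v s zero = F\<lparr>
      t_nodes := t_nodes F - {v},
      t_root := (if t_root F = v then s else t_root F),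
      t_low := (\<lambda>p. if t_low F p = v then s else t_low F p),
      t_high := (\<lambda>p. if t_high F p = v then s else t_high F p),
      t_wroot := (if t_root F = v \<and> zero then 0 else t_wroot F),
      t_wlow := (\<lambda>p. if t_low F p = v \<and> zero then 0 else t_wlow F p),
      t_whigh := (\<lambda>p. if t_high F p = v \<and> zero then 0 else t_whigh F p) \<rparr>"

definition rr3 :: "('v,'i) tdd \<Rightarrow> ('v,'i) tdd \<Rightarrow> bool" where
  "rr3 F G \<longleftrightarrow> (\<exists>v\<in>nonterms F. t_low F v = t_high F v \<and> t_wlow F v = t_whigh F v \<and>
     ((t_wlow F v = 1 \<and> G = redirect_delete F v (t_low F v) False)
      \<or> (t_wlow F v = 0 \<and> (\<exists>t\<in>t_terms F. t_val F t = 1 \<and> G = redirect_delete F v t True))))"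

definition rr4 :: "('v,'i) tdd \<Rightarrow> ('v,'i) tdd \<Rightarrow> bool" where
  "rr4 F G \<longleftrightarrow> (\<exists>u\<in>nonterms F. \<exists>v\<in>nonterms F. u \<noteq> v \<and>
      t_idx F u = t_idx F v \<and> t_low F u = t_low F v \<and> t_high F u = t_high F v \<and>
      t_wlow F u = t_wlow F v \<and> t_whigh F u = t_whigh F v \<and>
      G = redirect_delete F v u False)"

definition rr_step :: "('v,'i) tdd \<Rightarrow> ('v,'i) tdd \<Rightarrow> bool" where
  "rr_step F G \<longleftrightarrow> rr1 F G \<or> rr2 F G \<or> rr3 F G \<or> rr4 F G"

end

theory Submission imports Defs begin

definition dag :: "('v,'i) tdd \<Rightarrow> bool" where
  "dag F \<longleftrightarrow> finite (t_nodes F) \<and> t_terms F \<subseteq> t_nodes F \<and> t_root F \<in> t_nodes F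
     \<and> (\<forall>v\<in>nonterms F. t_low F v \<in> t_nodes F \<and> t_high F v \<in> t_nodes F)
     \<and> acyclic (succ_rel F)"

definition reach :: "('v,'i) tdd \<Rightarrow> 'v \<Rightarrow> 'v set" where
  "reach F v = {w. (v,w) \<in> (succ_rel F)\<^sup>*}"

definition cr :: "('v,'i) tdd \<Rightarrow> 'v \<Rightarrow> nat" where
  "cr F v = card (reach F v)"

definition stepT :: "('v,'i) tdd \<Rightarrow> ('v \<Rightarrow> 'i tensor) \<Rightarrow> 'v \<Rightarrow> 'i tensor" where
  "stepT F T v = (if v \<in> t_terms F then (\<lambda>_. t_val F v)
      else (\<lambda>c. t_wlow F v * (1 - idx_tensor (t_idx F v) c) * T (t_low F v) c
              + t_whigh F v * idx_tensor (t_idx F v) c * T (t_high F v) c))"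

lemma is_tdd_dag: "is_tdd F \<Longrightarrow> dag F"
  by (simp add: is_tdd_def dag_def)

lemma dag_fin: "dag F \<Longrightarrow> finite (t_nodes F)" by (simp add: dag_def)
lemma dag_terms: "dag F \<Longrightarrow> v \<in> t_terms F \<Longrightarrow> v \<in> t_nodes F" by (auto simp add: dag_def)
lemma dag_root: "dag F \<Longrightarrow> t_root F \<in> t_nodes F" by (simp add: dag_def)
lemma dag_acyc: "dag F \<Longrightarrow> acyclic (succ_rel F)" by (simp add: dag_def)

lemma succ_relI1: "v \<in> nonterms F \<Longrightarrow> (v, t_low F v) \<in> succ_rel F"
  unfolding succ_rel_def by auto
lemma succ_relI2: "v \<in> nonterms F \<Longrightarrow> (v, t_high F v) \<in> succ_rel F"
  unfolding succ_rel_def by auto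

lemma nontermsI: "v \<in> t_nodes F \<Longrightarrow> v \<notin> t_terms F \<Longrightarrow> v \<in> nonterms F"
  unfolding nonterms_def by auto

lemma reach_sub:
  assumes "dag F" "v \<in> t_nodes F"
  shows "reach F v \<subseteq> t_nodes F"
proof
  fix w assume "w \<in> reach F v"
  hence "(v,w) \<in> (succ_rel F)\<^sup>*" unfolding reach_def by simp
  thus "w \<in> t_nodes F"
  proof (induction rule: rtrancl_induct)
    case base then show ?case using assms by simp
  next
    case (step y z) then show ?case using assms(1) unfolding dag_def succ_rel_def by auto
  qed
qed

lemma reach_finite: "dag F \<Longrightarrow> v \<in> t_nodes F \<Longrightarrow> finite (reach F v)"
proof -
  assume a: "dag F" "v \<in> t_nodes F"
  have "finite (t_nodes F)" using dag_fin[OF a(1)] .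
  thus ?thesis using reach_sub[OF a] by (rule finite_subset[rotated])
qed

lemma self_reach: "v \<in> reach F v" unfolding reach_def by simp

lemma cr_pos: "dag F \<Longrightarrow> v \<in> t_nodes F \<Longrightarrow> 1 \<le> cr F v"
  unfolding cr_def using reach_finite self_reach
  by (metis One_nat_def Suc_leI card_gt_0_iff empty_iff)

lemma cr_le: "dag F \<Longrightarrow> v \<in> t_nodes F \<Longrightarrow> cr F v \<le> card (t_nodes F)"
proof -
  assume a: "dag F" "v \<in> t_nodes F"
  show ?thesis unfolding cr_def by (rule card_mono[OF dag_fin[OF a(1)] reach_sub[OF a]])
qed

lemma cr_succ:
  assumes "dag F" "(v,s) \<in> succ_rel F"
  shows "cr F s < cr F v"
proof -
  have v: "v \<in> t_nodes F" using assms unfolding succ_rel_def nonterms_def by auto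
  have sub: "reach F s \<subseteq> reach F v" using assms(2) unfolding reach_def
    by (auto intro: converse_rtrancl_into_rtrancl)
  have "v \<notin> reach F s"
  proof
    assume "v \<in> reach F s"
    hence "(s,v) \<in> (succ_rel F)\<^sup>*" unfolding reach_def by simp
    hence "(v,v) \<in> (succ_rel F)\<^sup>+" using assms(2) by (meson rtrancl_into_trancl2)
    thus False using dag_acyc[OF assms(1)] unfolding acyclic_def by blast
  qed
  moreover have "v \<in> reach F v" by (rule self_reach)
  ultimately have "reach F s \<subset> reach F v" using sub by blast
  thus ?thesis unfolding cr_def by (rule psubset_card_mono[OF reach_finite[OF assms(1) v]])
qed

lemma cr_low: "dag F \<Longrightarrow> v \<in> nonterms F \<Longrightarrow> cr F (t_low F v) < cr F v"
  by (erule cr_succ, erule succ_relI1)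
lemma cr_high: "dag F \<Longrightarrow> v \<in> nonterms F \<Longrightarrow> cr F (t_high F v) < cr F v"
  by (erule cr_succ, erule succ_relI2)

lemma low_in: "dag F \<Longrightarrow> v \<in> nonterms F \<Longrightarrow> t_low F v \<in> t_nodes F"
  by (simp add: dag_def)
lemma high_in: "dag F \<Longrightarrow> v \<in> nonterms F \<Longrightarrow> t_high F v \<in> t_nodes F"
  by (simp add: dag_def)

lemma fuel_stable:
  assumes "dag F"
  shows "v \<in> t_nodes F \<Longrightarrow> cr F v \<le> n \<Longrightarrow> n \<le> m \<Longrightarrow> ntensor_fuel m F v = ntensor_fuel n F v"
proof (induction n arbitrary: m v)
  case 0
  then show ?case using cr_pos[OF assms] by fastforce
next
  case (Suc n)
  then obtain m' where m: "m = Suc m'" by (cases m) auto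
  show ?case
  proof (cases "v \<in> t_terms F")
    case True then show ?thesis using m by simp
  next
    case False
    hence nt: "v \<in> nonterms F" using Suc.prems nontermsI by metis
    have l: "ntensor_fuel m' F (t_low F v) = ntensor_fuel n F (t_low F v)"
      using Suc.IH[of "t_low F v" m'] low_in[OF assms nt] cr_low[OF assms nt] Suc.prems m by simp
    have h: "ntensor_fuel m' F (t_high F v) = ntensor_fuel n F (t_high F v)"
      using Suc.IH[of "t_high F v" m'] high_in[OF assms nt] cr_high[OF assms nt] Suc.prems m by simp
    show ?thesis using False l h m by simp
  qed
qed

lemma node_tensor_rec:
  assumes "dag F" "v \<in> t_nodes F"
  shows "node_tensor F v = stepT F (node_tensor F) v"
proof -
  obtain k where k: "card (t_nodes F) = Suc k"
    using cr_pos[OF assms] cr_le[OF assms] by (cases "card (t_nodes F)") auto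
  show ?thesis
  proof (cases "v \<in> t_terms F")
    case True then show ?thesis unfolding node_tensor_def stepT_def k by simp
  next
    case False
    hence nt: "v \<in> nonterms F" using assms nontermsI by metis
    have l: "node_tensor F (t_low F v) = ntensor_fuel k F (t_low F v)"
      unfolding node_tensor_def k
      using fuel_stable[OF assms(1) low_in[OF assms(1) nt], of k "Suc k"] cr_low[OF assms(1) nt]
        cr_le[OF assms] k by simp
    have h: "node_tensor F (t_high F v) = ntensor_fuel k F (t_high F v)"
      unfolding node_tensor_def k
      using fuel_stable[OF assms(1) high_in[OF assms(1) nt], of k "Suc k"] cr_high[OF assms(1) nt]
        cr_le[OF assms] k by simp
    show ?thesis using False unfolding stepT_def l h by (simp add: node_tensor_def k)
  qed
qed

lemma rec_unique:
  assumes "dag F" "\<And>v. v \<in> t_nodes F \<Longrightarrow> T v = stepT F T v"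
  shows "v \<in> t_nodes F \<Longrightarrow> T v = node_tensor F v"
proof (induction "cr F v" arbitrary: v rule: less_induct)
  case less
  show ?case
  proof (cases "v \<in> t_terms F")
    case True then show ?thesis using assms(2)[OF less.prems] node_tensor_rec[OF assms(1) less.prems]
      unfolding stepT_def by simp
  next
    case False
    hence nt: "v \<in> nonterms F" using less.prems nontermsI by metis
    have l: "T (t_low F v) = node_tensor F (t_low F v)"
      using less.hyps cr_low[OF assms(1) nt] low_in[OF assms(1) nt] by blast
    have h: "T (t_high F v) = node_tensor F (t_high F v)"
      using less.hyps cr_high[OF assms(1) nt] high_in[OF assms(1) nt] by blast
    show ?thesis using assms(2)[OF less.prems] node_tensor_rec[OF assms(1) less.prems] False
      unfolding stepT_def l h by simp
  qed
qed

lemma acyc_term: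
  assumes "R \<subseteq> S \<union> (UNIV \<times> {t})" "\<And>b. (t,b) \<notin> R" "acyclic S"
  shows "acyclic R"
proof -
  have *: "(x,y) \<in> R\<^sup>+ \<Longrightarrow> y \<noteq> t \<Longrightarrow> (x,y) \<in> S\<^sup>+" for x y
  proof (induction rule: trancl_induct)
    case (base y) then show ?case using assms(1) by auto
  next
    case (step y z)
    have "y \<noteq> t" using step.hyps(2) assms(2) by blast
    then show ?case using step assms(1) by (meson UnE mem_Sigma_iff singletonD subsetD trancl.trancl_into_trancl)
  qed
  show ?thesis unfolding acyclic_def
  proof (intro allI notI)
    fix x assume a: "(x,x) \<in> R\<^sup>+"
    then obtain z where "(x,z) \<in> R" using tranclD by metis
    hence "x \<noteq> t" using assms(2) by blast
    thus False using *[OF a] assms(3) unfolding acyclic_def by blast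
  qed
qed

lemma acyc_map:
  assumes "\<And>a b. (a,b) \<in> R \<Longrightarrow> (h a, h b) \<in> S\<^sup>+" "acyclic S"
  shows "acyclic R"
proof -
  have *: "(x,y) \<in> R\<^sup>+ \<Longrightarrow> (h x, h y) \<in> S\<^sup>+" for x y
  proof (induction rule: trancl_induct)
    case (base y) then show ?case using assms(1) by auto
  next
    case (step y z) then show ?case using assms(1) by (meson trancl_trans)
  qed
  show ?thesis using * assms(2) unfolding acyclic_def by blast
qed


definition indep :: "'i tensor \<Rightarrow> 'i \<Rightarrow> bool" where
  "indep \<phi> x \<longleftrightarrow> (\<forall>c b. \<phi> (c(x:=b)) = \<phi> c)"

lemma ordered_low: "ordered_tdd F \<Longrightarrow> v \<in> nonterms F \<Longrightarrow> t_low F v \<notin> t_terms F \<Longrightarrow> t_idx F v < t_idx F (t_low F v)"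
  unfolding ordered_tdd_def by blast
lemma ordered_high: "ordered_tdd F \<Longrightarrow> v \<in> nonterms F \<Longrightarrow> t_high F v \<notin> t_terms F \<Longrightarrow> t_idx F v < t_idx F (t_high F v)"
  unfolding ordered_tdd_def by blast

lemma indep_node:
  assumes "dag F" "ordered_tdd F"
  shows "v \<in> t_nodes F \<Longrightarrow> (v \<in> nonterms F \<longrightarrow> x < t_idx F v) \<Longrightarrow> indep (node_tensor F v) x"
proof (induction "cr F v" arbitrary: v rule: less_induct)
  case less
  show ?case
  proof (cases "v \<in> t_terms F")
    case True then show ?thesis using node_tensor_rec[OF assms(1) less.prems(1)]
      unfolding stepT_def indep_def by simp
  next
    case False
    hence nt: "v \<in> nonterms F" using less.prems nontermsI by metis
    hence xv: "x < t_idx F v" using less.prems by blast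
    have l: "indep (node_tensor F (t_low F v)) x"
      apply (rule less.hyps[OF cr_low[OF assms(1) nt] low_in[OF assms(1) nt]])
      using ordered_low[OF assms(2) nt] xv unfolding nonterms_def by auto
    have h: "indep (node_tensor F (t_high F v)) x"
      apply (rule less.hyps[OF cr_high[OF assms(1) nt] high_in[OF assms(1) nt]])
      using ordered_high[OF assms(2) nt] xv unfolding nonterms_def by auto
    have xne: "x \<noteq> t_idx F v" using xv by simp
    show ?thesis unfolding indep_def
    proof (intro allI)
      fix c b
      show "node_tensor F v (c(x := b)) = node_tensor F v c"
        apply (subst (1 2) node_tensor_rec[OF assms(1) less.prems(1)])
        using False l h xne unfolding stepT_def indep_def idx_tensor_def by simp
    qed
  qed
qed

lemma child_indep_low:
  assumes "dag F" "ordered_tdd F" "v \<in> nonterms F"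
  shows "indep (node_tensor F (t_low F v)) (t_idx F v)"
  apply (rule indep_node[OF assms(1,2) low_in[OF assms(1,3)]])
  using ordered_low[OF assms(2,3)] unfolding nonterms_def by auto

lemma child_indep_high:
  assumes "dag F" "ordered_tdd F" "v \<in> nonterms F"
  shows "indep (node_tensor F (t_high F v)) (t_idx F v)"
  apply (rule indep_node[OF assms(1,2) high_in[OF assms(1,3)]])
  using ordered_high[OF assms(2,3)] unfolding nonterms_def by auto

lemma eval_low:
  assumes "dag F" "ordered_tdd F" "v \<in> nonterms F"
  shows "node_tensor F v (c(t_idx F v := False)) = t_wlow F v * node_tensor F (t_low F v) c"
proof -
  have v: "v \<in> t_nodes F" "v \<notin> t_terms F" using assms(3) unfolding nonterms_def by auto
  show ?thesis
    apply (subst node_tensor_rec[OF assms(1) v(1)])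
    using child_indep_low[OF assms] v(2) unfolding stepT_def indep_def idx_tensor_def by simp
qed

lemma eval_high:
  assumes "dag F" "ordered_tdd F" "v \<in> nonterms F"
  shows "node_tensor F v (c(t_idx F v := True)) = t_whigh F v * node_tensor F (t_high F v) c"
proof -
  have v: "v \<in> t_nodes F" "v \<notin> t_terms F" using assms(3) unfolding nonterms_def by auto
  show ?thesis
    apply (subst node_tensor_rec[OF assms(1) v(1)])
    using child_indep_high[OF assms] v(2) unfolding stepT_def indep_def idx_tensor_def by simp
qed

lemma normal_const: "normal_tensor (\<lambda>_::('i::{finite,linorder}) assignment. a) \<longleftrightarrow> a = 0 \<or> a = 1"
  unfolding normal_tensor_def by (auto simp: fun_eq_iff)

lemma max_abs_scale:
  fixes \<phi> :: "('i::finite) tensor"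
  shows "max_abs (\<lambda>c. k * \<phi> c) = cmod k * max_abs \<phi>"
proof -
  have "mono ((*) (cmod k))" by (simp add: monoI mult_left_mono)
  moreover have "range (\<lambda>b. cmod (k * \<phi> b)) = (*) (cmod k) ` range (\<lambda>b. cmod (\<phi> b))"
    by (auto simp: norm_mult)
  ultimately show ?thesis unfolding max_abs_def
    using mono_Max_commute[of "(*) (cmod k)" "range (\<lambda>b. cmod (\<phi> b))"] by simp
qed

lemma pivot_scale:
  fixes \<phi> :: "('i::{finite,linorder}) tensor"
  assumes "k \<noteq> 0"
  shows "pivot (\<lambda>c. k * \<phi> c) = pivot \<phi>"
proof -
  have *: "cmod (k * \<phi> a) = max_abs (\<lambda>c. k * \<phi> c) \<longleftrightarrow> cmod (\<phi> a) = max_abs \<phi>" for a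
    using assms by (simp add: max_abs_scale norm_mult)
  show ?thesis unfolding pivot_def * ..
qed

lemma normal_scale:
  fixes \<phi> :: "('i::{finite,linorder}) tensor"
  assumes "normal_tensor \<phi>" "\<phi> \<noteq> (\<lambda>_. 0)" "normal_tensor (\<lambda>c. k * \<phi> c)" "k \<noteq> 0"
  shows "k = 1"
proof -
  have a: "\<phi> (pivot \<phi>) = 1" using assms(1,2) unfolding normal_tensor_def by blast
  have "(\<lambda>c. k * \<phi> c) \<noteq> (\<lambda>_. 0)" using assms(2,4) by (auto simp: fun_eq_iff)
  hence "k * \<phi> (pivot \<phi>) = 1" using assms(3) pivot_scale[OF assms(4), of \<phi>]
    unfolding normal_tensor_def by simp
  thus ?thesis using a by simp
qed


lemma acyc_merge:
  assumes "acyclic S" "\<And>z. (u,z) \<in> S \<longleftrightarrow> (v,z) \<in> S"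
    and "\<And>a b. (a,b) \<in> R \<Longrightarrow> (a,b) \<in> S \<or> (b = u \<and> (a,v) \<in> S)"
  shows "acyclic R"
proof -
  have *: "(x,y) \<in> R\<^sup>+ \<Longrightarrow> (x,y) \<in> S\<^sup>+ \<or> (y = u \<and> (x,v) \<in> S\<^sup>+)" for x y
  proof (induction rule: trancl_induct)
    case (base y) then show ?case using assms(3) by blast
  next
    case (step y z)
    from assms(3)[OF step.hyps(2)] show ?case
    proof
      assume yz: "(y,z) \<in> S"
      from step.IH show ?thesis
      proof
        assume "(x,y) \<in> S\<^sup>+" then show ?thesis using yz by (meson trancl.trancl_into_trancl)
      next
        assume "y = u \<and> (x,v) \<in> S\<^sup>+"
        hence "(v,z) \<in> S" "(x,v) \<in> S\<^sup>+" using yz assms(2) by auto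
        then show ?thesis by (meson trancl.trancl_into_trancl)
      qed
    next
      assume zu: "z = u \<and> (y,v) \<in> S"
      from step.IH show ?thesis
      proof
        assume "(x,y) \<in> S\<^sup>+" then show ?thesis using zu by (meson trancl.trancl_into_trancl)
      next
        assume "y = u \<and> (x,v) \<in> S\<^sup>+" then show ?thesis using zu by simp
      qed
    qed
  qed
  show ?thesis unfolding acyclic_def
  proof (intro allI notI)
    fix x assume a: "(x,x) \<in> R\<^sup>+"
    from *[OF a] show False
    proof
      assume "(x,x) \<in> S\<^sup>+" then show False using assms(1) unfolding acyclic_def by blast
    next
      assume xu: "x = u \<and> (x,v) \<in> S\<^sup>+"
      then obtain c where c: "(u,c) \<in> S" "(c,v) \<in> S\<^sup>*" using tranclD by metis
      have "(v,c) \<in> S" using c(1) assms(2) by blast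
      hence "(v,v) \<in> S\<^sup>+" using c(2) by (meson rtrancl_into_trancl2)
      then show False using assms(1) unfolding acyclic_def by blast
    qed
  qed
qed

definition tinv :: "('v,'i::{finite,linorder}) tdd \<Rightarrow> bool" where
  "tinv F \<longleftrightarrow> dag F \<and> ordered_tdd F \<and> normal_tdd F"

lemma rd_simps:
  "t_nodes (redirect_delete F v s z) = t_nodes F - {v}"
  "t_terms (redirect_delete F v s z) = t_terms F"
  "t_idx (redirect_delete F v s z) = t_idx F"
  "t_val (redirect_delete F v s z) = t_val F"
  "t_root (redirect_delete F v s z) = (if t_root F = v then s else t_root F)"
  "t_low (redirect_delete F v s z) = (\<lambda>p. if t_low F p = v then s else t_low F p)"
  "t_high (redirect_delete F v s z) = (\<lambda>p. if t_high F p = v then s else t_high F p)"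
  "t_wroot (redirect_delete F v s z) = (if t_root F = v \<and> z then 0 else t_wroot F)"
  "t_wlow (redirect_delete F v s z) = (\<lambda>p. if t_low F p = v \<and> z then 0 else t_wlow F p)"
  "t_whigh (redirect_delete F v s z) = (\<lambda>p. if t_high F p = v \<and> z then 0 else t_whigh F p)"
  unfolding redirect_delete_def by simp_all

lemma rd_nonterms: "nonterms (redirect_delete F v s z) = nonterms F - {v}"
  unfolding nonterms_def rd_simps by blast

lemma rd_common:
  assumes "dag F" "v \<in> nonterms F" "s \<in> t_nodes F" "s \<noteq> v"
    and acyc: "acyclic (succ_rel (redirect_delete F v s z))"
    and hyp: "if z then node_tensor F v = (\<lambda>_. 0) else node_tensor F v = node_tensor F s"
    and nF: "normal_tdd F"
  shows "dag (redirect_delete F v s z)" "normal_tdd (redirect_delete F v s z)"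
    "tdd_tensor (redirect_delete F v s z) = tdd_tensor F"
proof -
  let ?G = "redirect_delete F v s z"
  have vt: "v \<notin> t_terms F" "v \<in> t_nodes F" using assms(2) unfolding nonterms_def by auto
  show dG: "dag ?G" unfolding dag_def rd_nonterms
    apply (simp add: rd_simps acyc)
    using assms(1,3,4) vt unfolding dag_def by auto
  have rec: "node_tensor F p = stepT ?G (node_tensor F) p" if p: "p \<in> t_nodes ?G" for p
  proof -
    have pF: "p \<in> t_nodes F" using p by (simp add: rd_simps)
    have l: "(if t_low F p = v \<and> z then 0 else t_wlow F p) * node_tensor F (if t_low F p = v then s else t_low F p) c
          = t_wlow F p * node_tensor F (t_low F p) c" for c
      using hyp by (cases z; cases "t_low F p = v"; simp)
    have h: "(if t_high F p = v \<and> z then 0 else t_whigh F p) * node_tensor F (if t_high F p = v then s else t_high F p) c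
          = t_whigh F p * node_tensor F (t_high F p) c" for c
      using hyp by (cases z; cases "t_high F p = v"; simp)
    show ?thesis
      apply (subst node_tensor_rec[OF assms(1) pF])
      unfolding stepT_def rd_simps using l h by (simp add: fun_eq_iff algebra_simps)
  qed
  have eq: "node_tensor ?G p = node_tensor F p" if "p \<in> t_nodes ?G" for p
    using rec_unique[OF dG rec that] by simp
  show "normal_tdd ?G" using nF eq unfolding normal_tdd_def by (simp add: rd_simps)
  have r: "t_root ?G \<in> t_nodes ?G" using dag_root[OF dG] .
  show "tdd_tensor ?G = tdd_tensor F"
    unfolding tdd_tensor_def eq[OF r] using hyp by (cases z; auto simp: rd_simps fun_eq_iff)
qed

lemma rr3_one:
  assumes "tinv F" "v \<in> nonterms F" "t_low F v = t_high F v" "t_wlow F v = 1" "t_whigh F v = 1"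
  shows "tinv (redirect_delete F v (t_low F v) False) \<and> tdd_tensor (redirect_delete F v (t_low F v) False) = tdd_tensor F"
proof -
  let ?s = "t_low F v"
  let ?G = "redirect_delete F v ?s False"
  have d: "dag F" and o: "ordered_tdd F" and n: "normal_tdd F" using assms(1) unfolding tinv_def by auto
  have vt: "v \<notin> t_terms F" "v \<in> t_nodes F" using assms(2) unfolding nonterms_def by auto
  have s: "?s \<in> t_nodes F" using low_in[OF d assms(2)] .
  have sv: "?s \<noteq> v" using cr_low[OF d assms(2)] by auto
  have acyc: "acyclic (succ_rel ?G)"
  proof (rule acyc_map[where h=id and S="succ_rel F"])
    show "acyclic (succ_rel F)" using dag_acyc[OF d] .
  next
    fix a b assume "(a,b) \<in> succ_rel ?G"
    hence a: "a \<in> nonterms F" "a \<noteq> v" and b: "b = (if t_low F a = v then ?s else t_low F a) \<or> b = (if t_high F a = v then ?s else t_high F a)"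
      unfolding succ_rel_def rd_nonterms rd_simps by auto
    have va: "(v, ?s) \<in> succ_rel F" using succ_relI1[OF assms(2)] .
    show "(id a, id b) \<in> (succ_rel F)\<^sup>+"
      using b succ_relI1[OF a(1)] succ_relI2[OF a(1)] va
      by (auto split: if_splits intro: trancl_into_trancl)
  qed
  have hyp: "node_tensor F v = node_tensor F ?s"
    apply (subst node_tensor_rec[OF d vt(2)])
    using vt assms(3-5) unfolding stepT_def by (auto simp: fun_eq_iff algebra_simps)
  have c: "dag ?G" "normal_tdd ?G" "tdd_tensor ?G = tdd_tensor F"
    using rd_common[OF d assms(2) s sv acyc _ n] hyp by simp_all
  have "ordered_tdd ?G"
    unfolding ordered_tdd_def rd_nonterms rd_simps
  proof (intro ballI impI)
    fix p q assume p: "p \<in> nonterms F - {v}" and q: "q \<in> {if t_low F p = v then ?s else t_low F p, if t_high F p = v then ?s else t_high F p}"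
      and qt: "q \<notin> t_terms F"
    have pF: "p \<in> nonterms F" using p by blast
    show "t_idx F p < t_idx F q"
    proof (cases "q = ?s \<and> (t_low F p = v \<or> t_high F p = v)")
      case True
      have "t_idx F p < t_idx F v" using True ordered_low[OF o pF] ordered_high[OF o pF] vt by auto
      moreover have "t_idx F v < t_idx F ?s" using ordered_low[OF o assms(2)] True qt by auto
      ultimately show ?thesis using True by simp
    next
      case False
      then show ?thesis using q qt ordered_low[OF o pF] ordered_high[OF o pF] by (auto split: if_splits)
    qed
  qed
  thus ?thesis using c unfolding tinv_def by simp
qed

lemma rr3_zero:
  assumes "tinv F" "v \<in> nonterms F" "t_wlow F v = 0" "t_whigh F v = 0" "t \<in> t_terms F"
  shows "tinv (redirect_delete F v t True) \<and> tdd_tensor (redirect_delete F v t True) = tdd_tensor F"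
proof -
  let ?G = "redirect_delete F v t True"
  have d: "dag F" and o: "ordered_tdd F" and n: "normal_tdd F" using assms(1) unfolding tinv_def by auto
  have vt: "v \<notin> t_terms F" "v \<in> t_nodes F" using assms(2) unfolding nonterms_def by auto
  have s: "t \<in> t_nodes F" using dag_terms[OF d assms(5)] .
  have sv: "t \<noteq> v" using vt assms(5) by auto
  have acyc: "acyclic (succ_rel ?G)"
  proof (rule acyc_term[where t=t and S="succ_rel F"])
    show "acyclic (succ_rel F)" using dag_acyc[OF d] .
    show "succ_rel ?G \<subseteq> succ_rel F \<union> UNIV \<times> {t}"
      unfolding succ_rel_def rd_nonterms rd_simps by auto
    show "(t, b) \<notin> succ_rel ?G" for b
      unfolding succ_rel_def rd_nonterms using assms(5) unfolding nonterms_def by auto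
  qed
  have hyp: "node_tensor F v = (\<lambda>_. 0)"
    apply (subst node_tensor_rec[OF d vt(2)])
    using vt assms(3,4) unfolding stepT_def by (auto simp: fun_eq_iff)
  have c: "dag ?G" "normal_tdd ?G" "tdd_tensor ?G = tdd_tensor F"
    using rd_common[OF d assms(2) s sv acyc _ n] hyp by simp_all
  have "ordered_tdd ?G"
    unfolding ordered_tdd_def rd_nonterms rd_simps
    using o assms(5) unfolding ordered_tdd_def by auto
  thus ?thesis using c unfolding tinv_def by simp
qed

lemma rr4_step:
  assumes "tinv F" "u \<in> nonterms F" "v \<in> nonterms F" "u \<noteq> v"
      "t_idx F u = t_idx F v" "t_low F u = t_low F v" "t_high F u = t_high F v"
      "t_wlow F u = t_wlow F v" "t_whigh F u = t_whigh F v"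
  shows "tinv (redirect_delete F v u False) \<and> tdd_tensor (redirect_delete F v u False) = tdd_tensor F"
proof -
  let ?G = "redirect_delete F v u False"
  have d: "dag F" and o: "ordered_tdd F" and n: "normal_tdd F" using assms(1) unfolding tinv_def by auto
  have vt: "v \<notin> t_terms F" "v \<in> t_nodes F" using assms(3) unfolding nonterms_def by auto
  have ut: "u \<notin> t_terms F" "u \<in> t_nodes F" using assms(2) unfolding nonterms_def by auto
  have lu: "t_low F u \<noteq> v" using cr_low[OF d assms(2)] cr_low[OF d assms(3)] assms(6) by auto
  have hu: "t_high F u \<noteq> v" using cr_high[OF d assms(2)] cr_high[OF d assms(3)] assms(7) by auto
  have acyc: "acyclic (succ_rel ?G)"
  proof (rule acyc_merge[where S="succ_rel F" and u=u and v=v])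
    show "acyclic (succ_rel F)" using dag_acyc[OF d] .
    show "(u, z) \<in> succ_rel F \<longleftrightarrow> (v, z) \<in> succ_rel F" for z
      using assms(2,3,6,7) unfolding succ_rel_def by auto
  next
    fix a b assume "(a,b) \<in> succ_rel ?G"
    hence a: "a \<in> nonterms F" "a \<noteq> v" and b: "b = (if t_low F a = v then u else t_low F a) \<or> b = (if t_high F a = v then u else t_high F a)"
      unfolding succ_rel_def rd_nonterms rd_simps by auto
    have e1: "(a, t_low F a) \<in> succ_rel F" "(a, t_high F a) \<in> succ_rel F"
      using succ_relI1[OF a(1)] succ_relI2[OF a(1)] by auto
    show "(a, b) \<in> succ_rel F \<or> (b = u \<and> (a, v) \<in> succ_rel F)"
      using b e1 by (auto split: if_splits)
  qed
  have hyp: "node_tensor F v = node_tensor F u"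
    apply (subst node_tensor_rec[OF d vt(2)])
    apply (subst node_tensor_rec[OF d ut(2)])
    using vt ut assms(5-9) unfolding stepT_def by simp
  have c: "dag ?G" "normal_tdd ?G" "tdd_tensor ?G = tdd_tensor F"
    using rd_common[OF d assms(3) ut(2) assms(4) acyc _ n] hyp by simp_all
  have "ordered_tdd ?G"
    unfolding ordered_tdd_def rd_nonterms rd_simps
  proof (intro ballI impI)
    fix p q assume p: "p \<in> nonterms F - {v}" and q: "q \<in> {if t_low F p = v then u else t_low F p, if t_high F p = v then u else t_high F p}"
      and qt: "q \<notin> t_terms F"
    have pF: "p \<in> nonterms F" using p by blast
    show "t_idx F p < t_idx F q"
      using q qt ordered_low[OF o pF] ordered_high[OF o pF] vt assms(5) by (auto split: if_splits)
  qed
  thus ?thesis using c unfolding tinv_def by simp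
qed


lemma rr1_step:
  assumes "tinv F" "rr1 F G"
  shows "tinv G \<and> tdd_tensor G = tdd_tensor F"
proof -
  have d: "dag F" and o: "ordered_tdd F" and n: "normal_tdd F" using assms(1) unfolding tinv_def by auto
  define T01 where "T01 = {u\<in>t_terms F. t_val F u = 0 \<or> t_val F u = 1}"
  define T1 where "T1 = {u\<in>t_terms F. t_val F u = 1}"
  define T0 where "T0 = {u\<in>t_terms F. t_val F u = 0}"
  obtain t where t: "t \<in> T01" "t \<in> T1 \<or> T1 = {}" and
    G: "G = F\<lparr> t_nodes := (t_nodes F - T01) \<union> {t},
                     t_terms := (t_terms F - T01) \<union> {t},
                     t_val := (\<lambda>u. if u = t then 1 else t_val F u),
                     t_root := (\<lambda>u. if u \<in> T01 then t else u) (t_root F),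
                     t_low := (\<lambda>v. (\<lambda>u. if u \<in> T01 then t else u) (t_low F v)),
                     t_high := (\<lambda>v. (\<lambda>u. if u \<in> T01 then t else u) (t_high F v)),
                     t_wlow := (\<lambda>v. (\<lambda>u w. if u \<in> T0 then 0 else w) (t_low F v) (t_wlow F v)),
                     t_whigh := (\<lambda>v. (\<lambda>u w. if u \<in> T0 then 0 else w) (t_high F v) (t_whigh F v)),
                     t_wroot := (\<lambda>u w. if u \<in> T0 then 0 else w) (t_root F) (t_wroot F) \<rparr>"
    using assms(2) unfolding rr1_def Let_def T01_def[symmetric] T1_def[symmetric] T0_def[symmetric] by blast
  define r where "r = (\<lambda>u. if u \<in> T01 then t else u)"
  define z where "z = (\<lambda>u (w::complex). if u \<in> T0 then 0 else w)"
  have T01t: "T01 \<subseteq> t_terms F" "T0 \<subseteq> T01" unfolding T01_def T0_def by auto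
  have tt: "t \<in> t_terms F" using t T01t by blast
  have tn: "t \<in> t_nodes F" using dag_terms[OF d tt] .
  have Gs: "t_nodes G = (t_nodes F - T01) \<union> {t}" "t_terms G = (t_terms F - T01) \<union> {t}"
     "t_val G = (\<lambda>u. if u = t then 1 else t_val F u)" "t_root G = r (t_root F)"
     "t_low G = (\<lambda>v. r (t_low F v))" "t_high G = (\<lambda>v. r (t_high F v))"
     "t_wlow G = (\<lambda>v. z (t_low F v) (t_wlow F v))" "t_whigh G = (\<lambda>v. z (t_high F v) (t_whigh F v))"
     "t_wroot G = z (t_root F) (t_wroot F)" "t_idx G = t_idx F"
    unfolding G r_def z_def by simp_all
  have ntG: "nonterms G = nonterms F" unfolding nonterms_def Gs using T01t tt by auto
  have rin: "q \<in> t_nodes F \<Longrightarrow> r q \<in> t_nodes G" for q unfolding Gs r_def by auto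
  have acyc: "acyclic (succ_rel G)"
  proof (rule acyc_term[where t=t and S="succ_rel F"])
    show "acyclic (succ_rel F)" using dag_acyc[OF d] .
    show "succ_rel G \<subseteq> succ_rel F \<union> UNIV \<times> {t}"
      unfolding succ_rel_def ntG Gs r_def by auto
    show "(t, b) \<notin> succ_rel G" for b
      unfolding succ_rel_def ntG using tt unfolding nonterms_def by auto
  qed
  have dG: "dag G" unfolding dag_def
    apply (intro conjI)
    using d acyc rin unfolding dag_def ntG apply (simp_all add: Gs)
    using T01t tn by auto
  define T where "T = (\<lambda>v. if v = t then (\<lambda>_. 1) else node_tensor F v)"
  have key: "z q w * T (r q) c = w * node_tensor F q c" if q: "q \<in> t_nodes F" for q w c
  proof -
    have qt: "q \<in> t_terms F \<Longrightarrow> node_tensor F q = (\<lambda>_. t_val F q)"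
      using node_tensor_rec[OF d q] unfolding stepT_def by simp
    show ?thesis
    proof (cases "q \<in> T01")
      case True
      hence qq: "q \<in> t_terms F" using T01t by blast
      show ?thesis
      proof (cases "q \<in> T0")
        case True then show ?thesis using qt[OF qq] unfolding z_def T0_def by simp
      next
        case False
        hence "t_val F q = 1" using \<open>q \<in> T01\<close> unfolding T01_def T0_def by auto
        then show ?thesis using qt[OF qq] False \<open>q \<in> T01\<close> unfolding z_def r_def T_def by simp
      qed
    next
      case False
      hence "q \<notin> T0" "q \<noteq> t" using T01t t by auto
      then show ?thesis using False unfolding z_def r_def T_def by simp
    qed
  qed
  have valt: "t \<in> t_terms F \<Longrightarrow> t_val F t = 1 \<or> t_val F t = 0" using t unfolding T01_def by auto
  have rec: "T p = stepT G T p" if p: "p \<in> t_nodes G" for p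
  proof (cases "p = t")
    case True then show ?thesis unfolding T_def stepT_def Gs by simp
  next
    case False
    hence pF: "p \<in> t_nodes F" "p \<notin> T01" using p unfolding Gs by auto
    show ?thesis
    proof (cases "p \<in> t_terms F")
      case True then show ?thesis using False pF node_tensor_rec[OF d pF(1)] unfolding T_def stepT_def Gs by simp
    next
      case nt: False
      hence ntp: "p \<in> nonterms F" using pF nontermsI by metis
      have l: "z (t_low F p) (t_wlow F p) * T (r (t_low F p)) c = t_wlow F p * node_tensor F (t_low F p) c" for c
        using key[OF low_in[OF d ntp]] .
      have h: "z (t_high F p) (t_whigh F p) * T (r (t_high F p)) c = t_whigh F p * node_tensor F (t_high F p) c" for c
        using key[OF high_in[OF d ntp]] .
      have pG: "p \<notin> t_terms G" using nt False unfolding Gs by auto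
      have "stepT G T p = stepT F (node_tensor F) p"
      proof (rule ext)
        fix c
        let ?I = "idx_tensor (t_idx F p) c"
        have "stepT G T p c = z (t_low F p) (t_wlow F p) * (1 - ?I) * T (r (t_low F p)) c
             + z (t_high F p) (t_whigh F p) * ?I * T (r (t_high F p)) c"
          using pG nt unfolding stepT_def by (simp add: Gs)
        also have "\<dots> = (1 - ?I) * (z (t_low F p) (t_wlow F p) * T (r (t_low F p)) c)
             + ?I * (z (t_high F p) (t_whigh F p) * T (r (t_high F p)) c)" by (simp add: algebra_simps)
        also have "\<dots> = (1 - ?I) * (t_wlow F p * node_tensor F (t_low F p) c)
             + ?I * (t_whigh F p * node_tensor F (t_high F p) c)" using l h by simp
        also have "\<dots> = stepT F (node_tensor F) p c"
          using nt unfolding stepT_def by (simp add: algebra_simps)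
        finally show "stepT G T p c = stepT F (node_tensor F) p c" .
      qed
      then show ?thesis using False node_tensor_rec[OF d pF(1)] unfolding T_def by simp
    qed
  qed
  have eq: "node_tensor G p = T p" if "p \<in> t_nodes G" for p
    using rec_unique[OF dG rec that] by simp
  have nG: "normal_tdd G" unfolding normal_tdd_def
  proof
    fix p assume p: "p \<in> t_nodes G"
    show "normal_tensor (node_tensor G p)"
    proof (cases "p = t")
      case True then show ?thesis using eq[OF p] normal_const unfolding T_def by (metis (no_types))
    next
      case False then show ?thesis using eq[OF p] n p unfolding T_def normal_tdd_def Gs by auto
    qed
  qed
  have oG: "ordered_tdd G" unfolding ordered_tdd_def ntG
  proof (intro ballI impI)
    fix p q assume p: "p \<in> nonterms F" and q: "q \<in> {t_low G p, t_high G p}" and qt: "q \<notin> t_terms G"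
    show "t_idx G p < t_idx G q"
      using q qt ordered_low[OF o p] ordered_high[OF o p] unfolding Gs r_def by (auto split: if_splits)
  qed
  have rootF: "t_root F \<in> t_nodes F" using dag_root[OF d] .
  have "tdd_tensor G = tdd_tensor F"
    unfolding tdd_tensor_def using eq[OF rin[OF rootF]] key[OF rootF] by (simp add: Gs)
  thus ?thesis using dG nG oG unfolding tinv_def by simp
qed


lemma rr2_step:
  assumes "tinv F" "rr2 F G"
  shows "tinv G \<and> tdd_tensor G = tdd_tensor F"
proof -
  have d: "dag F" and o: "ordered_tdd F" and n: "normal_tdd F" using assms(1) unfolding tinv_def by auto
  obtain t where tF: "t_terms F = {t}" and
    G: "G = (F\<lparr> t_root := (if t_wroot F = 0 then t else t_root F),
                  t_low := (\<lambda>v. if t_wlow F v = 0 then t else t_low F v),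
                  t_high := (\<lambda>v. if t_whigh F v = 0 then t else t_high F v) \<rparr>)
        \<lparr> t_nodes := {v\<in>t_nodes F. ((if t_wroot F = 0 then t else t_root F), v) \<in> (succ_rel (F\<lparr> t_root := (if t_wroot F = 0 then t else t_root F),
                  t_low := (\<lambda>v. if t_wlow F v = 0 then t else t_low F v),
                  t_high := (\<lambda>v. if t_whigh F v = 0 then t else t_high F v) \<rparr>))\<^sup>*},
          t_terms := t_terms F \<inter> {v\<in>t_nodes F. ((if t_wroot F = 0 then t else t_root F), v) \<in> (succ_rel (F\<lparr> t_root := (if t_wroot F = 0 then t else t_root F),
                  t_low := (\<lambda>v. if t_wlow F v = 0 then t else t_low F v),
                  t_high := (\<lambda>v. if t_whigh F v = 0 then t else t_high F v) \<rparr>))\<^sup>*} \<rparr>"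
    using assms(2) unfolding rr2_def Let_def by auto
  define G0 where "G0 = F\<lparr> t_root := (if t_wroot F = 0 then t else t_root F),
                  t_low := (\<lambda>v. if t_wlow F v = 0 then t else t_low F v),
                  t_high := (\<lambda>v. if t_whigh F v = 0 then t else t_high F v) \<rparr>"
  define R where "R = {v\<in>t_nodes F. (t_root G0, v) \<in> (succ_rel G0)\<^sup>*}"
  have G': "G = G0\<lparr> t_nodes := R, t_terms := t_terms F \<inter> R \<rparr>"
    unfolding G G0_def R_def by simp
  have tn: "t \<in> t_nodes F" using dag_terms[OF d] tF by simp
  have nt0: "nonterms G0 = nonterms F" unfolding nonterms_def G0_def by simp
  have RF: "R \<subseteq> t_nodes F" unfolding R_def by blast
  have ntG: "nonterms G = R \<inter> nonterms F" unfolding nonterms_def G' using RF by (auto simp: G0_def)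
  have s0: "succ_rel G0 \<subseteq> succ_rel F \<union> UNIV \<times> {t}"
    unfolding succ_rel_def nt0 by (auto simp: G0_def)
  have acyc0: "acyclic (succ_rel G0)"
  proof (rule acyc_term[OF s0])
    show "acyclic (succ_rel F)" using dag_acyc[OF d] .
    show "(t, b) \<notin> succ_rel G0" for b
      unfolding succ_rel_def nt0 using tF unfolding nonterms_def by auto
  qed
  have sG: "succ_rel G \<subseteq> succ_rel G0"
    unfolding succ_rel_def ntG nt0 by (auto simp: G' G0_def)
  have acyc: "acyclic (succ_rel G)" using acyclic_subset[OF acyc0 sG] .
  have root0: "t_root G0 \<in> t_nodes F" using d tn unfolding dag_def G0_def by auto
  have rootR: "t_root G0 \<in> R" unfolding R_def using root0 by simp
  have clos: "t_low G0 v \<in> R \<and> t_high G0 v \<in> R" if v: "v \<in> R \<inter> nonterms F" for v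
  proof -
    have "(v, t_low G0 v) \<in> succ_rel G0" "(v, t_high G0 v) \<in> succ_rel G0"
      using succ_relI1[of v G0] succ_relI2[of v G0] v nt0 by auto
    moreover have "(t_root G0, v) \<in> (succ_rel G0)\<^sup>*" using v unfolding R_def by blast
    moreover have "t_low G0 v \<in> t_nodes F" "t_high G0 v \<in> t_nodes F"
      using v low_in[OF d] high_in[OF d] tn by (auto simp: G0_def)
    ultimately show ?thesis unfolding R_def by (auto intro: rtrancl_into_rtrancl)
  qed
  have dG: "dag G" unfolding dag_def ntG
    apply (intro conjI)
    using d RF finite_subset unfolding dag_def apply (simp add: G') apply blast
    apply (simp add: G')
    using rootR apply (simp add: G')
    using clos apply (simp add: G' G0_def)
    using acyc by simp
  have rec: "node_tensor F p = stepT G (node_tensor F) p" if p: "p \<in> t_nodes G" for p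
  proof -
    have pF: "p \<in> t_nodes F" using p RF by (auto simp: G')
    have tv: "node_tensor F t = (\<lambda>_. t_val F t)" using node_tensor_rec[OF d tn] tF unfolding stepT_def by simp
    have l: "t_wlow F p * node_tensor F (if t_wlow F p = 0 then t else t_low F p) c = t_wlow F p * node_tensor F (t_low F p) c" for c
      by simp
    have h: "t_whigh F p * node_tensor F (if t_whigh F p = 0 then t else t_high F p) c = t_whigh F p * node_tensor F (t_high F p) c" for c
      by simp
    show ?thesis
      apply (subst node_tensor_rec[OF d pF])
      unfolding stepT_def using p l h by (auto simp: G' G0_def fun_eq_iff algebra_simps)
  qed
  have eq: "node_tensor G p = node_tensor F p" if "p \<in> t_nodes G" for p
    using rec_unique[OF dG rec that] by simp
  have nG: "normal_tdd G" using n eq RF unfolding normal_tdd_def by (auto simp: G')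
  have oG: "ordered_tdd G" unfolding ordered_tdd_def ntG
  proof (intro ballI impI)
    fix p q assume p: "p \<in> R \<inter> nonterms F" and q: "q \<in> {t_low G p, t_high G p}" and qt: "q \<notin> t_terms G"
    have pF: "p \<in> nonterms F" using p by blast
    have "q \<in> R" using clos[OF p] q by (auto simp: G')
    hence "q \<notin> t_terms F" using qt by (simp add: G')
    then show "t_idx G p < t_idx G q"
      using q tF ordered_low[OF o pF] ordered_high[OF o pF] by (auto simp: G' G0_def split: if_splits)
  qed
  have rG: "t_root G \<in> t_nodes G" using dag_root[OF dG] .
  have "tdd_tensor G = tdd_tensor F"
    unfolding tdd_tensor_def eq[OF rG] by (auto simp: G' G0_def fun_eq_iff)
  thus ?thesis using dG nG oG unfolding tinv_def by simp
qed

lemma rr_step_pres: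
  assumes "tinv F" "rr_step F G"
  shows "tinv G \<and> tdd_tensor G = tdd_tensor F"
  using assms(2) unfolding rr_step_def
proof (elim disjE)
  assume "rr1 F G" then show ?thesis using rr1_step assms(1) by blast
next
  assume "rr2 F G" then show ?thesis using rr2_step assms(1) by blast
next
  assume "rr3 F G" then show ?thesis using rr3_one rr3_zero assms(1) unfolding rr3_def by metis
next
  assume "rr4 F G" then show ?thesis using rr4_step assms(1) unfolding rr4_def by metis
qed

lemma rr_steps_pres:
  assumes "rr_step\<^sup>*\<^sup>* F G" "tinv F"
  shows "tinv G \<and> tdd_tensor G = tdd_tensor F"
  using assms by (induction rule: rtranclp_induct) (auto dest: rr_step_pres)


lemma dag_has_term:
  assumes "dag F" shows "\<exists>t. t \<in> t_terms F"
proof -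
  have "t_root F \<in> t_nodes F" using dag_root[OF assms] .
  then obtain w where w: "w \<in> t_nodes F" and m: "\<forall>y. y \<in> t_nodes F \<longrightarrow> cr F w \<le> cr F y"
    using ex_has_least_nat[of "\<lambda>x. x \<in> t_nodes F" "t_root F" "cr F"] by blast
  show ?thesis
  proof (cases "w \<in> t_terms F")
    case False
    hence nt: "w \<in> nonterms F" using w nontermsI by metis
    then show ?thesis using m low_in[OF assms nt] cr_low[OF assms nt] by force
  qed blast
qed

lemma term_val:
  assumes "tinv F" "v \<in> t_terms F"
  shows "t_val F v = 0 \<or> t_val F v = 1"
proof -
  have d: "dag F" using assms unfolding tinv_def by blast
  have vn: "v \<in> t_nodes F" using dag_terms[OF d assms(2)] .
  have "node_tensor F v = (\<lambda>_. t_val F v)" using node_tensor_rec[OF d vn] assms(2) unfolding stepT_def by simp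
  thus ?thesis using assms vn normal_const unfolding tinv_def normal_tdd_def by metis
qed

lemma irr_facts:
  assumes inv: "tinv G" and irr: "\<not> (\<exists>H. rr_step G H)"
  shows "\<exists>t. t_terms G = {t} \<and> t_val G t = 1
     \<and> (t_wroot G = 0 \<longrightarrow> t_root G = t)
     \<and> (\<forall>v\<in>nonterms G. (t_wlow G v = 0 \<longrightarrow> t_low G v = t) \<and> (t_whigh G v = 0 \<longrightarrow> t_high G v = t))
     \<and> (\<forall>v\<in>t_nodes G. (t_root G, v) \<in> (succ_rel G)\<^sup>*)"
proof -
  have d: "dag G" using inv unfolding tinv_def by blast
  define T01 where "T01 = {u\<in>t_terms G. t_val G u = 0 \<or> t_val G u = 1}"
  define T1 where "T1 = {u\<in>t_terms G. t_val G u = 1}"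
  define T0 where "T0 = {u\<in>t_terms G. t_val G u = 0}"
  have c1: "\<not> (card T1 \<ge> 2 \<or> T0 \<noteq> {})"
  proof
    assume a: "card T1 \<ge> 2 \<or> T0 \<noteq> {}"
    obtain t where t: "t \<in> T01" "t \<in> T1 \<or> T1 = {}"
    proof (cases "T1 = {}")
      case True
      then have "T0 \<noteq> {}" using a by auto
      then show ?thesis using that True unfolding T0_def T01_def by blast
    next
      case False
      then show ?thesis using that unfolding T1_def T01_def by blast
    qed
    have "rr1 G (G\<lparr> t_nodes := (t_nodes G - T01) \<union> {t},
                     t_terms := (t_terms G - T01) \<union> {t},
                     t_val := (\<lambda>u. if u = t then 1 else t_val G u),
                     t_root := (\<lambda>u. if u \<in> T01 then t else u) (t_root G),
                     t_low := (\<lambda>v. (\<lambda>u. if u \<in> T01 then t else u) (t_low G v)),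
                     t_high := (\<lambda>v. (\<lambda>u. if u \<in> T01 then t else u) (t_high G v)),
                     t_wlow := (\<lambda>v. (\<lambda>u w. if u \<in> T0 then 0 else w) (t_low G v) (t_wlow G v)),
                     t_whigh := (\<lambda>v. (\<lambda>u w. if u \<in> T0 then 0 else w) (t_high G v) (t_whigh G v)),
                     t_wroot := (\<lambda>u w. if u \<in> T0 then 0 else w) (t_root G) (t_wroot G) \<rparr>)"
      unfolding rr1_def Let_def T01_def[symmetric] T1_def[symmetric] T0_def[symmetric]
      using a t by blast
    thus False using irr unfolding rr_step_def by blast
  qed
  obtain t where tt: "t \<in> t_terms G" using dag_has_term[OF d] by blast
  have allv: "t_val G u = 1" if "u \<in> t_terms G" for u
    using term_val[OF inv that] c1 that unfolding T0_def by blast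
  have fin: "finite T1" by (rule finite_subset[OF _ dag_fin[OF d]]) (auto simp: T1_def dest: dag_terms[OF d])
  have "card T1 \<le> 1" using c1 by simp
  hence one: "\<forall>a\<in>T1. \<forall>b\<in>T1. a = b" using card_le_Suc0_iff_eq[OF fin] by simp
  have "t \<in> T1" using tt allv unfolding T1_def by blast
  hence "T1 = {t}" using one by blast
  hence tG: "t_terms G = {t}" using allv unfolding T1_def by blast
  have c2: "\<not> ((t_wroot G = 0 \<and> t_root G \<noteq> t)
      \<or> (\<exists>v\<in>nonterms G. (t_wlow G v = 0 \<and> t_low G v \<noteq> t) \<or> (t_whigh G v = 0 \<and> t_high G v \<noteq> t))
      \<or> (\<exists>v\<in>t_nodes G. (t_root G, v) \<notin> (succ_rel G)\<^sup>*))"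
  proof
    assume a: "(t_wroot G = 0 \<and> t_root G \<noteq> t)
      \<or> (\<exists>v\<in>nonterms G. (t_wlow G v = 0 \<and> t_low G v \<noteq> t) \<or> (t_whigh G v = 0 \<and> t_high G v \<noteq> t))
      \<or> (\<exists>v\<in>t_nodes G. (t_root G, v) \<notin> (succ_rel G)\<^sup>*)"
    have "\<exists>H. rr2 G H" unfolding rr2_def Let_def using a tG by blast
    thus False using irr unfolding rr_step_def by blast
  qed
  show ?thesis using c2 tG allv by blast
qed


lemma irr_reduced:
  assumes inv: "tinv G" and irr: "\<not> (\<exists>H. rr_step G H)"
  shows "is_tdd G \<and> reduced_tdd G"
proof -
  have d: "dag G" and o: "ordered_tdd G" and n: "normal_tdd G" using inv unfolding tinv_def by auto
  obtain t where tG: "t_terms G = {t}" and vt: "t_val G t = 1"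
    and wr: "t_wroot G = 0 \<longrightarrow> t_root G = t"
    and we: "\<forall>v\<in>nonterms G. (t_wlow G v = 0 \<longrightarrow> t_low G v = t) \<and> (t_whigh G v = 0 \<longrightarrow> t_high G v = t)"
    and reachall: "\<forall>v\<in>t_nodes G. (t_root G, v) \<in> (succ_rel G)\<^sup>*"
    using irr_facts[OF inv irr] by blast
  have tn: "t \<in> t_nodes G" using dag_terms[OF d] tG by simp
  have Pt: "node_tensor G t = (\<lambda>_. 1)" using node_tensor_rec[OF d tn] tG vt unfolding stepT_def by simp
  have isG: "is_tdd G" unfolding is_tdd_def using d reachall by (simp add: dag_def)
  have no3a: "\<not> (t_low G v = t_high G v \<and> t_wlow G v = 1 \<and> t_whigh G v = 1)" if v: "v \<in> nonterms G" for v
  proof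
    assume a: "t_low G v = t_high G v \<and> t_wlow G v = 1 \<and> t_whigh G v = 1"
    have "rr3 G (redirect_delete G v (t_low G v) False)" unfolding rr3_def using v a by auto
    thus False using irr unfolding rr_step_def by blast
  qed
  have no3b: "\<not> (t_wlow G v = 0 \<and> t_whigh G v = 0)" if v: "v \<in> nonterms G" for v
  proof
    assume a: "t_wlow G v = 0 \<and> t_whigh G v = 0"
    hence lt: "t_low G v = t" "t_high G v = t" using we v by auto
    have "rr3 G (redirect_delete G v t True)" unfolding rr3_def
      apply (rule bexI[of _ v]) using v a tG vt lt by auto
    thus False using irr unfolding rr_step_def by blast
  qed
  have no4: "u = v" if "u \<in> nonterms G" "v \<in> nonterms G"
      "t_idx G u = t_idx G v" "t_low G u = t_low G v" "t_high G u = t_high G v"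
      "t_wlow G u = t_wlow G v" "t_whigh G u = t_whigh G v" for u v
  proof (rule ccontr)
    assume "u \<noteq> v"
    hence "rr4 G (redirect_delete G v u False)" unfolding rr4_def using that by blast
    thus False using irr unfolding rr_step_def by blast
  qed
  have nz: "v \<in> t_nodes G \<Longrightarrow> node_tensor G v \<noteq> (\<lambda>_. 0)" for v
  proof (induction "cr G v" arbitrary: v rule: less_induct)
    case less
    show ?case
    proof (cases "v \<in> t_terms G")
      case True then show ?thesis using Pt tG by (auto simp: fun_eq_iff)
    next
      case False
      hence nt: "v \<in> nonterms G" using less.prems nontermsI by metis
      show ?thesis
      proof (cases "t_wlow G v = 0")
        case False
        have "node_tensor G (t_low G v) \<noteq> (\<lambda>_. 0)"
          using less.hyps cr_low[OF d nt] low_in[OF d nt] by blast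
        then obtain c where "node_tensor G (t_low G v) c \<noteq> 0" by auto
        hence "node_tensor G v (c(t_idx G v := False)) \<noteq> 0" using eval_low[OF d o nt] False by simp
        then show ?thesis by auto
      next
        case True
        hence wh: "t_whigh G v \<noteq> 0" using no3b[OF nt] by blast
        have "node_tensor G (t_high G v) \<noteq> (\<lambda>_. 0)"
          using less.hyps cr_high[OF d nt] high_in[OF d nt] by blast
        then obtain c where "node_tensor G (t_high G v) c \<noteq> 0" by auto
        hence "node_tensor G v (c(t_idx G v := True)) \<noteq> 0" using eval_high[OF d o nt] wh by simp
        then show ?thesis by auto
      qed
    qed
  qed
  have nrm: "normal_tensor (node_tensor G v)" if "v \<in> t_nodes G" for v
    using n that unfolding normal_tdd_def by blast
  have Hcase: False if u: "u \<in> nonterms G" and ind: "indep (node_tensor G u) (t_idx G u)"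
     and IH: "node_tensor G (t_low G u) = node_tensor G (t_high G u) \<Longrightarrow> t_low G u = t_high G u" for u
  proof -
    have un: "u \<in> t_nodes G" using u unfolding nonterms_def by blast
    have e1: "node_tensor G u = (\<lambda>c. t_wlow G u * node_tensor G (t_low G u) c)"
    proof
      fix c
      have "node_tensor G u c = node_tensor G u (c(t_idx G u := False))" using ind unfolding indep_def by simp
      thus "node_tensor G u c = t_wlow G u * node_tensor G (t_low G u) c" using eval_low[OF d o u] by simp
    qed
    have e2: "node_tensor G u = (\<lambda>c. t_whigh G u * node_tensor G (t_high G u) c)"
    proof
      fix c
      have "node_tensor G u c = node_tensor G u (c(t_idx G u := True))" using ind unfolding indep_def by simp
      thus "node_tensor G u c = t_whigh G u * node_tensor G (t_high G u) c" using eval_high[OF d o u] by simp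
    qed
    have w1: "t_wlow G u \<noteq> 0" using e1 nz[OF un] by auto
    have w2: "t_whigh G u \<noteq> 0" using e2 nz[OF un] by auto
    have l1: "t_wlow G u = 1"
      using normal_scale[OF nrm[OF low_in[OF d u]] nz[OF low_in[OF d u]] _ w1] nrm[OF un] e1 by simp
    have l2: "t_whigh G u = 1"
      using normal_scale[OF nrm[OF high_in[OF d u]] nz[OF high_in[OF d u]] _ w2] nrm[OF un] e2 by simp
    have "node_tensor G (t_low G u) = node_tensor G (t_high G u)" using e1 e2 l1 l2 by simp
    hence "t_low G u = t_high G u" using IH by blast
    thus False using no3a[OF u] l1 l2 by blast
  qed
  have canon: "\<forall>u v. u \<in> t_nodes G \<longrightarrow> v \<in> t_nodes G \<longrightarrow> cr G u \<le> k \<longrightarrow> cr G v \<le> k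
       \<longrightarrow> node_tensor G u = node_tensor G v \<longrightarrow> u = v" for k
  proof (induction k)
    case 0 then show ?case using cr_pos[OF d] by fastforce
  next
    case (Suc k)
    show ?case
    proof (intro allI impI)
      fix u v assume un: "u \<in> t_nodes G" and vn: "v \<in> t_nodes G" and cu: "cr G u \<le> Suc k"
        and cv: "cr G v \<le> Suc k" and eq: "node_tensor G u = node_tensor G v"
      have IHc: "a = b" if "a \<in> t_nodes G" "b \<in> t_nodes G" "cr G a < cr G w" "cr G b < cr G w"
          "cr G w \<le> Suc k" "node_tensor G a = node_tensor G b" for a b w
        using Suc.IH that by auto
      have Hc: False if w: "w \<in> nonterms G" "cr G w \<le> Suc k" "indep (node_tensor G w) (t_idx G w)" for w
        using Hcase[OF w(1) w(3)] IHc[OF low_in[OF d w(1)] high_in[OF d w(1)] cr_low[OF d w(1)] cr_high[OF d w(1)] w(2)]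
        by blast
      have tind: "indep (node_tensor G t) x" for x using Pt unfolding indep_def by simp
      show "u = v"
      proof (cases "u \<in> t_terms G")
        case ut: True
        show ?thesis
        proof (cases "v \<in> t_terms G")
          case True then show ?thesis using ut tG by auto
        next
          case False
          hence nv: "v \<in> nonterms G" using vn nontermsI by metis
          have "indep (node_tensor G v) (t_idx G v)" using eq ut tG tind by auto
          then show ?thesis using Hc[OF nv cv] by blast
        qed
      next
        case uf: False
        hence nu: "u \<in> nonterms G" using un nontermsI by metis
        show ?thesis
        proof (cases "v \<in> t_terms G")
          case True
          have "indep (node_tensor G u) (t_idx G u)" using eq True tG tind by auto
          then show ?thesis using Hc[OF nu cu] by blast
        next
          case False
          hence nv: "v \<in> nonterms G" using vn nontermsI by metis
          consider "t_idx G u < t_idx G v" | "t_idx G v < t_idx G u" | "t_idx G u = t_idx G v"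
            using less_linear by blast
          then show ?thesis
          proof cases
            case 1
            have "indep (node_tensor G v) (t_idx G u)" using indep_node[OF d o vn] 1 by blast
            then show ?thesis using Hc[OF nu cu] eq by simp
          next
            case 2
            have "indep (node_tensor G u) (t_idx G v)" using indep_node[OF d o un] 2 by blast
            then show ?thesis using Hc[OF nv cv] eq by simp
          next
            case 3
            have child: "wa = wb \<and> a = b" if a: "a \<in> t_nodes G" and b: "b \<in> t_nodes G"
               and ca: "cr G a \<le> k" and cb: "cr G b \<le> k" and ab: "\<And>c. wa * node_tensor G a c = wb * node_tensor G b c"
               and za: "wa = 0 \<Longrightarrow> a = t" and zb: "wb = 0 \<Longrightarrow> b = t" for a b wa wb
            proof (cases "wa = 0")
              case True
              have "wb = 0"
              proof (rule ccontr)
                assume "wb \<noteq> 0"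
                hence "node_tensor G b = (\<lambda>_. 0)" using ab True by (auto simp: fun_eq_iff)
                thus False using nz[OF b] by blast
              qed
              then show ?thesis using True za zb by simp
            next
              case False
              have wb: "wb \<noteq> 0"
              proof
                assume "wb = 0"
                hence "node_tensor G a = (\<lambda>_. 0)" using ab False by (auto simp: fun_eq_iff)
                thus False using nz[OF a] by blast
              qed
              have ea: "node_tensor G a = (\<lambda>c. (wb / wa) * node_tensor G b c)"
                using ab False by (auto simp: fun_eq_iff field_simps)
              have nn: "normal_tensor (\<lambda>c. (wb / wa) * node_tensor G b c)" using nrm[OF a] ea by simp
              have "wb / wa \<noteq> 0" using False wb by simp
              then have "wb / wa = 1"
                using normal_scale[OF nrm[OF b] nz[OF b] nn] by blast
              hence "wa = wb" using False by (simp add: field_simps)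
              moreover have "node_tensor G a = node_tensor G b" using ea \<open>wb / wa = 1\<close> by simp
              ultimately show ?thesis using Suc.IH a b ca cb by blast
            qed
            have cl: "cr G (t_low G u) \<le> k" "cr G (t_high G u) \<le> k" "cr G (t_low G v) \<le> k" "cr G (t_high G v) \<le> k"
              using cr_low[OF d nu] cr_high[OF d nu] cr_low[OF d nv] cr_high[OF d nv] cu cv by auto
            have L: "t_wlow G u = t_wlow G v \<and> t_low G u = t_low G v"
            proof (rule child[OF low_in[OF d nu] low_in[OF d nv] cl(1) cl(3)])
              fix c
              show "t_wlow G u * node_tensor G (t_low G u) c = t_wlow G v * node_tensor G (t_low G v) c"
                using eval_low[OF d o nu, of c] eval_low[OF d o nv, of c] eq 3 by simp
            qed (use we nu nv in auto)
            have Hh: "t_whigh G u = t_whigh G v \<and> t_high G u = t_high G v"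
            proof (rule child[OF high_in[OF d nu] high_in[OF d nv] cl(2) cl(4)])
              fix c
              show "t_whigh G u * node_tensor G (t_high G u) c = t_whigh G v * node_tensor G (t_high G v) c"
                using eval_high[OF d o nu, of c] eval_high[OF d o nv, of c] eq 3 by simp
            qed (use we nu nv in auto)
            show ?thesis using no4[OF nu nv 3] L Hh by blast
          qed
        qed
      qed
    qed
  qed
  have dist: "\<forall>u\<in>t_nodes G. \<forall>v\<in>t_nodes G. u \<noteq> v \<longrightarrow> node_tensor G u \<noteq> node_tensor G v"
    using canon[of "max (cr G u) (cr G v)" for u v] by (meson max.cobounded1 max.cobounded2)
  have "reduced_tdd G" unfolding reduced_tdd_def
    using n nz dist tG vt wr we by blast
  thus ?thesis using isG by blast
qed

theorem theorem5:
  fixes F :: "('v, 'i::{finite,linorder}) tdd"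
  assumes "is_tdd F" and "ordered_tdd F" and "normal_tdd F"
  shows "(\<forall>G. rr_step F G \<longrightarrow> tdd_tensor G = tdd_tensor F)
       \<and> (\<forall>G. rr_step\<^sup>*\<^sup>* F G \<and> \<not> (\<exists>H. rr_step G H) \<longrightarrow>
             is_tdd G \<and> ordered_tdd G \<and> reduced_tdd G \<and> tdd_tensor G = tdd_tensor F)"
proof -
  have i: "tinv F" using assms is_tdd_dag unfolding tinv_def by blast
  show ?thesis
  proof (rule conjI; intro allI impI)
    fix G assume "rr_step F G" thus "tdd_tensor G = tdd_tensor F" using rr_step_pres[OF i] by blast
  next
    fix G assume a: "rr_step\<^sup>*\<^sup>* F G \<and> \<not> (\<exists>H. rr_step G H)"
    have "tinv G \<and> tdd_tensor G = tdd_tensor F" using rr_steps_pres[OF _ i] a by blast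
    thus "is_tdd G \<and> ordered_tdd G \<and> reduced_tdd G \<and> tdd_tensor G = tdd_tensor F"
      using irr_reduced a unfolding tinv_def by blast
  qed
qed

end
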